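(* Let $n,p\ge1$ be integers, let $\mathbf{A}^{p+1}_{n+1}$ be as defined in the context, and let $t_{np}(x)=(n+1).x^{\max\{n+1,p\}}$. Then: (a) for every $a\in A$, $t_{np}(a)\vee\sim t_{np}(a)=\top$ (i.e. $\mathbf{A}^{p+1}_{n+1}\models t_{np}(x)\vee\neg t_{np}(x)\approx\top$); (b) $\mathrm{Rad}(\mathbf{A}^{p+1}_{n+1})=\{a\in A: t_{np}(a)=\top\}=\{a\in A:\ (n+1).a^k=\top\text{ for every integer }k>0\}$; (c) for every integer $k>0$ and every $a\in A$, $(n+1).\big(a\vee\sim(a^p)\big)^k=\top$.
   Context: Order $\mathbb{Z}\times\mathbb{Z}$ lexicographically: $(m,r)\preccurlyeq(k,s)$ iff $m<k$, or $m=k$ and $r\le s$; addition/subtraction of pairs is componentwise, and $\min,\max$ of pairs refer to $\preccurlyeq$. For an integer $n\ge1$ let $L^\omega_{n+1}=\{(m,r)\in\mathbb{Z}^2:(0,0)\preccurlyeq(m,r)\preccurlyeq(n,0)\}$ with $x\ast y=\max\{(0,0),x+y-(n,0)\}$ and $x\to y=\min\{(n,0),(n,0)-x+y\}$. For an integer $p\ge1$ let $L_{p+1}=\{0,1,\dots,p\}$ with $\alpha\ast\beta=\max\{0,\alpha+\beta-p\}$. Define $$A=A^{p+1}_{n+1}=\{\langle(m,r),\alpha\rangle:(m,r)\in L^\omega_{n+1},\ \alpha\in\{0,p\}\}\cup\{\langle(m,r),\alpha\rangle:(0,0)\preccurlyeq(m,r)\preccurlyeq(n-1,0),\ 0<\alpha<p\}.$$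 Order: $\langle(m,r),\alpha\rangle\le\langle(k,s),\beta\rangle$ iff one of: (o1) $\alpha\neq0$, $\alpha\le\beta$ and $(m,r)\preccurlyeq(k,s)$; (o2) $\alpha=\beta=0$ and $(k,s)\preccurlyeq(m,r)$; (o3) $\alpha=0$, $\beta\ne0$ and $(n-1,0)\preccurlyeq(m+k,r+s)$. $\wedge,\vee$ denote meet and join for $\le$. Put $\bot=\langle(n,0),0\rangle$, $\top=\langle(n,0),p\rangle$. For $a=\langle(m,r),\alpha\rangle$, $b=\langle(k,s),\beta\rangle\in A$ define $a\odot b$ by: (P1) if $\alpha,\beta\ge1$ and $\alpha+\beta>p$: $a\odot b=\langle(m,r)\ast(k,s),\alpha+\beta-p\rangle$; (P2) if $\alpha,\beta\ge1$ and $\alpha+\beta\le p$: $a\odot b=\langle\min\{(n,0),(2n-(m+k+1),-(r+s))\},0\rangle$; (P3) if $\alpha\ge1$, $\beta=0$: $a\odot b=\langle(m,r)\to(k,s),0\rangle$, and if $\alpha=0$, $\beta\ge1$: $a\odot b=\langle(k,s)\to(m,r),0\rangle$; (P4) if $\alpha=\beta=0$: $a\odot b=\langle\min\{(n,0),(m+k+1,r+s)\},0\rangle$. Define $\sim\langle(m,r),\alpha\rangle=\langle(m,r),p-\alpha\rangle$ if $\alpha\in\{0,p\}$, and $\sim\langle(m,r),\alpha\rangle=\langle(n-1-m,-r),p-\alpha\rangle$ if $0<\alpha<p$. Define $a\Rightarrow b=\sim(a\odot\sim b)$ (so $\sim a=a\Rightarrow\bot$, interpreting $\neg x=x\to\bot$).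 The algebra $\mathbf{A}^{p+1}_{n+1}$ is $\langle A;\odot,\Rightarrow,\wedge,\vee,\bot,\top\rangle$. Terms: $a^0=\top$, $a^{k+1}=a\odot a^k$; $a\oplus b=\sim(\sim a\odot\sim b)$; $0.a=\bot$, $(k+1).a=a\oplus k.a$. $\mathrm{Rad}$ is the intersection of all maximal proper implicative filters, where an implicative filter is a subset containing $\top$, closed under $\odot$ and upward closed. *)

theory Defs
  imports Main
begin

text \<open>Pairs in Z x Z with lexicographic order; elements of A are ((m,r),alpha).
  Parameters n p are natural numbers (the paper's integers n,p >= 1).\<close>

type_synonym zz = "int \<times> int"
type_synonym elt = "zz \<times> int"

definition lex_le :: "zz \<Rightarrow> zz \<Rightarrow> bool" where
  "lex_le x y \<longleftrightarrow> fst x < fst y \<or> (fst x = fst y \<and> snd x \<le> snd y)"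

definition lmin :: "zz \<Rightarrow> zz \<Rightarrow> zz" where
  "lmin x y = (if lex_le x y then x else y)"

definition lmax :: "zz \<Rightarrow> zz \<Rightarrow> zz" where
  "lmax x y = (if lex_le x y then y else x)"

definition zadd :: "zz \<Rightarrow> zz \<Rightarrow> zz" where
  "zadd x y = (fst x + fst y, snd x + snd y)"

definition zsub :: "zz \<Rightarrow> zz \<Rightarrow> zz" where
  "zsub x y = (fst x - fst y, snd x - snd y)"

definition Lw_star :: "nat \<Rightarrow> zz \<Rightarrow> zz \<Rightarrow> zz" where
  "Lw_star n x y = lmax (0,0) (zsub (zadd x y) (int n, 0))"

definition Lw_impl :: "nat \<Rightarrow> zz \<Rightarrow> zz \<Rightarrow> zz" where
  "Lw_impl n x y = lmin (int n, 0) (zadd (zsub (int n, 0) x) y)"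

definition Lw :: "nat \<Rightarrow> zz set" where
  "Lw n = {x. lex_le (0,0) x \<and> lex_le x (int n, 0)}"

definition Acar :: "nat \<Rightarrow> nat \<Rightarrow> elt set" where
  "Acar n p = {(x, \<alpha>). x \<in> Lw n \<and> (\<alpha> = 0 \<or> \<alpha> = int p)}
     \<union> {(x, \<alpha>). lex_le (0,0) x \<and> lex_le x (int n - 1, 0) \<and> 0 < \<alpha> \<and> \<alpha> < int p}"

definition Ale :: "nat \<Rightarrow> nat \<Rightarrow> elt \<Rightarrow> elt \<Rightarrow> bool" where
  "Ale n p a b \<longleftrightarrow>
     (case a of (x, \<alpha>) \<Rightarrow> case b of (y, \<beta>) \<Rightarrow>
       (\<alpha> \<noteq> 0 \<and> \<alpha> \<le> \<beta> \<and> lex_le x y)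
     \<or> (\<alpha> = 0 \<and> \<beta> = 0 \<and> lex_le y x)
     \<or> (\<alpha> = 0 \<and> \<beta> \<noteq> 0 \<and> lex_le (int n - 1, 0) (zadd x y)))"

definition Ajoin :: "nat \<Rightarrow> nat \<Rightarrow> elt \<Rightarrow> elt \<Rightarrow> elt" where
  "Ajoin n p a b = (THE c. c \<in> Acar n p \<and> Ale n p a c \<and> Ale n p b c \<and>
      (\<forall>d\<in>Acar n p. Ale n p a d \<and> Ale n p b d \<longrightarrow> Ale n p c d))"

definition Abot :: "nat \<Rightarrow> nat \<Rightarrow> elt" where
  "Abot n p = ((int n, 0), 0)"

definition Atop :: "nat \<Rightarrow> nat \<Rightarrow> elt" where
  "Atop n p = ((int n, 0), int p)"

definition Aodot :: "nat \<Rightarrow> nat \<Rightarrow> elt \<Rightarrow> elt \<Rightarrow> elt" where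
  "Aodot n p a b =
     (case a of ((m, r), \<alpha>) \<Rightarrow> case b of ((k, s), \<beta>) \<Rightarrow>
       if 1 \<le> \<alpha> \<and> 1 \<le> \<beta> \<and> \<alpha> + \<beta> > int p then
         (Lw_star n (m, r) (k, s), \<alpha> + \<beta> - int p)
       else if 1 \<le> \<alpha> \<and> 1 \<le> \<beta> then
         (lmin (int n, 0) (2 * int n - (m + k + 1), - (r + s)), 0)
       else if 1 \<le> \<alpha> \<and> \<beta> = 0 then
         (Lw_impl n (m, r) (k, s), 0)
       else if \<alpha> = 0 \<and> 1 \<le> \<beta> then
         (Lw_impl n (k, s) (m, r), 0)
       else
         (lmin (int n, 0) (m + k + 1, r + s), 0))"

definition Aneg :: "nat \<Rightarrow> nat \<Rightarrow> elt \<Rightarrow> elt" where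
  "Aneg n p a =
     (case a of ((m, r), \<alpha>) \<Rightarrow>
       if \<alpha> = 0 \<or> \<alpha> = int p then ((m, r), int p - \<alpha>)
       else ((int n - 1 - m, - r), int p - \<alpha>))"

definition Aimp :: "nat \<Rightarrow> nat \<Rightarrow> elt \<Rightarrow> elt \<Rightarrow> elt" where
  "Aimp n p a b = Aneg n p (Aodot n p a (Aneg n p b))"

primrec Apow :: "nat \<Rightarrow> nat \<Rightarrow> elt \<Rightarrow> nat \<Rightarrow> elt" where
  "Apow n p a 0 = Atop n p"
| "Apow n p a (Suc k) = Aodot n p a (Apow n p a k)"

definition Aoplus :: "nat \<Rightarrow> nat \<Rightarrow> elt \<Rightarrow> elt \<Rightarrow> elt" where
  "Aoplus n p a b = Aneg n p (Aodot n p (Aneg n p a) (Aneg n p b))"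

primrec Atimes :: "nat \<Rightarrow> nat \<Rightarrow> nat \<Rightarrow> elt \<Rightarrow> elt" where
  "Atimes n p 0 a = Abot n p"
| "Atimes n p (Suc k) a = Aoplus n p a (Atimes n p k a)"

definition t_np :: "nat \<Rightarrow> nat \<Rightarrow> elt \<Rightarrow> elt" where
  "t_np n p a = Atimes n p (n + 1) (Apow n p a (max (n + 1) p))"

definition impl_filter :: "nat \<Rightarrow> nat \<Rightarrow> elt set \<Rightarrow> bool" where
  "impl_filter n p F \<longleftrightarrow> F \<subseteq> Acar n p \<and> Atop n p \<in> F \<and>
     (\<forall>a\<in>F. \<forall>b\<in>F. Aodot n p a b \<in> F) \<and>
     (\<forall>a\<in>F. \<forall>b\<in>Acar n p. Ale n p a b \<longrightarrow> b \<in> F)"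

definition max_filter :: "nat \<Rightarrow> nat \<Rightarrow> elt set \<Rightarrow> bool" where
  "max_filter n p F \<longleftrightarrow> impl_filter n p F \<and> F \<noteq> Acar n p \<and>
     (\<forall>G. impl_filter n p G \<and> G \<noteq> Acar n p \<and> F \<subseteq> G \<longrightarrow> G = F)"

definition Rad :: "nat \<Rightarrow> nat \<Rightarrow> elt set" where
  "Rad n p = {a \<in> Acar n p. \<forall>F. max_filter n p F \<longrightarrow> a \<in> F}"

end

theory Submission
  imports Defs
begin


lemma lex_simp[simp]: "lex_le (a,b) (c,d) = (a < c \<or> (a = c \<and> b \<le> d))" by (simp add: lex_le_def)
lemma zadd_simp[simp]: "zadd (a,b) (c,d) = (a+c, b+d)" by (simp add: zadd_def)
lemma zsub_simp[simp]: "zsub (a,b) (c,d) = (a-c, b-d)" by (simp add: zsub_def)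

definition inv0 :: "nat \<Rightarrow> nat \<Rightarrow> zz \<Rightarrow> bool" where
 "inv0 n k y \<longleftrightarrow> lex_le y (int n, 0) \<and> (lex_le (int k - 1, 0) y \<or> y = (int n, 0))"

lemma Aneg_Aneg[simp]: "Aneg n p (Aneg n p a) = a"
  by (cases a) (auto simp: Aneg_def split: prod.splits)

lemma Atimes_eq: "p \<ge> 1 \<Longrightarrow> Atimes n p k a = Aneg n p (Apow n p (Aneg n p a) k)"
proof (induction k)
  case 0 then show ?case by (simp add: Abot_def Atop_def Aneg_def)
next
  case (Suc k) then show ?case by (simp add: Aoplus_def)
qed

lemma pow_bot:
  assumes "p \<ge> 1" "lex_le (0,0) (m,r)" "lex_le (m,r) (int n,0)"
  shows "\<exists>y. Apow n p ((m,r),0) (Suc j) = (y,0) \<and> inv0 n (Suc j) y"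
proof (induction j)
  case 0 show ?case using assms by (auto simp add: Aodot_def Atop_def Lw_impl_def inv0_def lmin_def)
next
  case (Suc j)
  then obtain y where h: "Apow n p ((m,r),0) (Suc j) = (y,0)" "inv0 n (Suc j) y" by blast
  obtain y1 y2 where y: "y = (y1,y2)" by (cases y)
  have e: "Apow n p ((m,r),0) (Suc (Suc j)) = (lmin (int n,0) (m+y1+1, r+y2), 0)"
    using h(1) y by (simp add: Aodot_def)
  have "inv0 n (Suc (Suc j)) (lmin (int n,0) (m+y1+1, r+y2))" using h(2) y assms by (auto simp: inv0_def lmin_def)
  then show ?case using e by blast
qed

lemma pow_mid:
  assumes "p \<ge> 1" "0 < \<alpha>" "\<alpha> < int p" "lex_le (0,0) (m,r)" "lex_le (m,r) (int n - 1,0)"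
  shows "(\<exists>w. Apow n p ((m,r),\<alpha>) (Suc j) = (w, int (Suc j)*\<alpha> - int j * int p)
            \<and> int (Suc j)*\<alpha> - int j*int p \<ge> 1 \<and> lex_le (0,0) w
            \<and> (w = (0,0) \<or> lex_le w (int n - int (Suc j), 0)))
       \<or> (\<exists>y. Apow n p ((m,r),\<alpha>) (Suc j) = (y,0) \<and> inv0 n (Suc j) y)"
proof (induction j)
  case 0 show ?case using assms by (auto simp add: Aodot_def Atop_def Lw_star_def lmax_def)
next
  case (Suc j)
  then show ?case
  proof
    assume "\<exists>w. Apow n p ((m,r),\<alpha>) (Suc j) = (w, int (Suc j)*\<alpha> - int j * int p)
            \<and> int (Suc j)*\<alpha> - int j*int p \<ge> 1 \<and> lex_le (0,0) w
            \<and> (w = (0,0) \<or> lex_le w (int n - int (Suc j), 0))"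
    then obtain w where h: "Apow n p ((m,r),\<alpha>) (Suc j) = (w, int (Suc j)*\<alpha> - int j * int p)"
        "int (Suc j)*\<alpha> - int j*int p \<ge> 1" "lex_le (0,0) w"
        "(w = (0,0) \<or> lex_le w (int n - int (Suc j), 0))" by blast
    obtain w1 w2 where w: "w = (w1,w2)" by (cases w)
    define \<beta> where "\<beta> = int (Suc j)*\<alpha> - int j * int p"
    have b1: "\<beta> \<ge> 1" using h(2) \<beta>_def by simp
    show ?case
    proof (cases "\<alpha> + \<beta> > int p")
      case True
      have e: "Apow n p ((m,r),\<alpha>) (Suc (Suc j)) = (Lw_star n (m,r) (w1,w2), \<alpha> + \<beta> - int p)"
        using h(1) w b1 True assms \<beta>_def by (simp add: Aodot_def)
      have e2: "\<alpha> + \<beta> - int p = int (Suc (Suc j))*\<alpha> - int (Suc j) * int p"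
        unfolding \<beta>_def by (simp add: algebra_simps)
      have "lex_le (0,0) (Lw_star n (m,r) (w1,w2)) \<and> (Lw_star n (m,r) (w1,w2) = (0,0) \<or> lex_le (Lw_star n (m,r) (w1,w2)) (int n - int (Suc (Suc j)), 0))"
        using h(3,4) w assms by (auto simp: Lw_star_def lmax_def)
      then show ?thesis using e e2 True by auto
    next
      case False
      have e: "Apow n p ((m,r),\<alpha>) (Suc (Suc j)) = (lmin (int n, 0) (2 * int n - (m + w1 + 1), - (r + w2)), 0)"
        using h(1) w b1 False assms \<beta>_def by (simp add: Aodot_def)
      have "inv0 n (Suc (Suc j)) (lmin (int n, 0) (2 * int n - (m + w1 + 1), - (r + w2)))"
        using h(3,4) w assms by (auto simp: inv0_def lmin_def)
      then show ?thesis using e by blast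
    qed
  next
    assume "\<exists>y. Apow n p ((m,r),\<alpha>) (Suc j) = (y,0) \<and> inv0 n (Suc j) y"
    then obtain y where h: "Apow n p ((m,r),\<alpha>) (Suc j) = (y,0)" "inv0 n (Suc j) y" by blast
    obtain y1 y2 where y: "y = (y1,y2)" by (cases y)
    have e: "Apow n p ((m,r),\<alpha>) (Suc (Suc j)) = (Lw_impl n (m,r) (y1,y2), 0)"
      using h(1) y assms by (simp add: Aodot_def)
    have "inv0 n (Suc (Suc j)) (Lw_impl n (m,r) (y1,y2))"
      using h(2) y assms by (auto simp: inv0_def lmin_def Lw_impl_def)
    then show ?case using e by blast
  qed
qed

lemma inv0_N: "inv0 n k y \<Longrightarrow> int k - 1 \<ge> int n \<Longrightarrow> y = (int n, 0)"
  by (cases y) (auto simp: inv0_def)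

lemma inv0_Lw: "inv0 n k y \<Longrightarrow> k \<ge> 1 \<Longrightarrow> y \<in> Lw n"
  by (cases y) (auto simp: inv0_def Lw_def)

lemma Acar_cases:
  assumes "((m,r),\<alpha>) \<in> Acar n p"
  obtains (top) "\<alpha> = int p" "(m,r) \<in> Lw n"
   | (bot) "\<alpha> = 0" "(m,r) \<in> Lw n"
   | (mid) "0 < \<alpha>" "\<alpha> < int p" "lex_le (0,0) (m,r)" "lex_le (m,r) (int n - 1, 0)"
  using assms unfolding Acar_def by blast

lemma pow_nontop:
  assumes "p \<ge> 1" "((m,r),\<alpha>) \<in> Acar n p" "\<alpha> \<noteq> int p" "k \<ge> n+1" "k \<ge> p"
  shows "Apow n p ((m,r),\<alpha>) k = Abot n p"
proof -
  obtain j where k: "k = Suc j" using assms(4) by (cases k) auto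
  from assms(2) show ?thesis
  proof (cases rule: Acar_cases)
    case top then show ?thesis using assms by simp
  next
    case bot
    then obtain y where "Apow n p ((m,r),0) (Suc j) = (y,0)" "inv0 n (Suc j) y"
      using pow_bot[OF assms(1), of m r n j] by (auto simp: Lw_def)
    then show ?thesis using inv0_N[of n "Suc j" y] k assms bot by (auto simp: Abot_def)
  next
    case mid
    have "int (Suc j) * \<alpha> \<le> int (Suc j) * (int p - 1)"
      using mid by (intro mult_left_mono) auto
    then have nb: "\<not> (int (Suc j)*\<alpha> - int j*int p \<ge> 1)" using k assms by (auto simp: algebra_simps)
    then obtain y where "Apow n p ((m,r),\<alpha>) (Suc j) = (y,0)" "inv0 n (Suc j) y"
      using pow_mid[OF assms(1) mid, of j] by blast
    then show ?thesis using inv0_N[of n "Suc j" y] k assms by (auto simp: Abot_def)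
  qed
qed

lemma pow_mid_p:
  assumes "p \<ge> 1" "0 < \<alpha>" "\<alpha> < int p" "lex_le (0,0) (m,r)" "lex_le (m,r) (int n - 1,0)"
  shows "\<exists>y. Apow n p ((m,r),\<alpha>) p = (y,0) \<and> y \<in> Lw n"
proof -
  obtain j where k: "p = Suc j" using assms(1) by (cases p) auto
  have "int (Suc j) * \<alpha> \<le> int (Suc j) * (int p - 1)"
    using assms by (intro mult_left_mono) auto
  then have nb: "\<not> (int (Suc j)*\<alpha> - int j*int p \<ge> 1)" using k assms by (auto simp: algebra_simps)
  then obtain y where "Apow n p ((m,r),\<alpha>) (Suc j) = (y,0)" "inv0 n (Suc j) y"
    using pow_mid[OF assms, of j] by blast
  then show ?thesis using inv0_Lw[of n "Suc j" y] k by auto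
qed

lemma pow_top:
  assumes "p \<ge> 1" "x \<in> Lw n"
  shows "\<exists>y. Apow n p (x, int p) k = (y, int p) \<and> y \<in> Lw n"
proof (induction k)
  case 0 then show ?case by (auto simp: Atop_def Lw_def)
next
  case (Suc k)
  then obtain y where h: "Apow n p (x, int p) k = (y, int p)" "y \<in> Lw n" by blast
  obtain y1 y2 where y: "y = (y1,y2)" by (cases y)
  obtain x1 x2 where x: "x = (x1,x2)" by (cases x)
  have e: "Apow n p (x, int p) (Suc k) = (Lw_star n (x1,x2) (y1,y2), int p)"
    using h(1) x y assms by (simp add: Aodot_def)
  have "Lw_star n (x1,x2) (y1,y2) \<in> Lw n" using h(2) assms x y
    by (auto simp: Lw_def Lw_star_def lmax_def)
  then show ?case using e by blast
qed

lemma times_top: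
  assumes "p \<ge> 1" "y \<in> Lw n"
  shows "Atimes n p (n+1) (y, int p) = Atop n p"
proof -
  obtain y1 y2 where yy: "y = (y1,y2)" by (cases y)
  have "Aneg n p (y, int p) = ((y1,y2), 0)" using yy by (simp add: Aneg_def)
  moreover obtain z where "Apow n p ((y1,y2),0) (Suc n) = (z,0)" "inv0 n (Suc n) z"
    using pow_bot[OF assms(1), of y1 y2 n n] assms yy by (auto simp: Lw_def)
  moreover have "z = (int n, 0)" using inv0_N[of n "Suc n" z] calculation by simp
  ultimately have "Atimes n p (n+1) (y, int p) = Aneg n p ((int n,0),0)"
    using Atimes_eq[OF assms(1), of n "n+1" "(y, int p)"] by simp
  then show ?thesis by (simp add: Aneg_def Atop_def)
qed

lemma pow_Atop: "p \<ge> 1 \<Longrightarrow> Apow n p (Atop n p) k = Atop n p"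
  by (induction k) (auto simp: Atop_def Aodot_def Lw_star_def lmax_def)

lemma times_bot: "p \<ge> 1 \<Longrightarrow> Atimes n p k (Abot n p) = Abot n p"
proof -
  assume p: "p \<ge> 1"
  have "Aneg n p (Abot n p) = Atop n p" by (simp add: Aneg_def Abot_def Atop_def)
  moreover have "Aneg n p (Atop n p) = Abot n p" by (simp add: Aneg_def Abot_def Atop_def)
  ultimately show ?thesis using Atimes_eq[OF p] pow_Atop[OF p] by simp
qed

lemma Acar_alpha: "((m,r),\<alpha>) \<in> Acar n p \<Longrightarrow> 0 \<le> \<alpha> \<and> \<alpha> \<le> int p"
  by (auto simp: Acar_def)

lemma Ale_antisym:
  assumes "a \<in> Acar n p" "b \<in> Acar n p" "Ale n p a b" "Ale n p b a" shows "a = b"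
proof -
  obtain m r \<alpha> where a: "a = ((m,r),\<alpha>)" by (metis prod.exhaust)
  obtain k s \<beta> where b: "b = ((k,s),\<beta>)" by (metis prod.exhaust)
  show ?thesis using assms Acar_alpha[of m r \<alpha> n p] Acar_alpha[of k s \<beta> n p] a b
    by (auto simp: Ale_def)
qed

lemma join_eq:
  assumes "c \<in> Acar n p" "Ale n p a c" "Ale n p b c"
    "\<And>d. d \<in> Acar n p \<Longrightarrow> Ale n p a d \<Longrightarrow> Ale n p b d \<Longrightarrow> Ale n p c d"
  shows "Ajoin n p a b = c"
  unfolding Ajoin_def
proof (rule the_equality)
  show "c \<in> Acar n p \<and> Ale n p a c \<and> Ale n p b c \<and>
      (\<forall>d\<in>Acar n p. Ale n p a d \<and> Ale n p b d \<longrightarrow> Ale n p c d)" using assms by blast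
next
  fix c' assume h: "c' \<in> Acar n p \<and> Ale n p a c' \<and> Ale n p b c' \<and>
      (\<forall>d\<in>Acar n p. Ale n p a d \<and> Ale n p b d \<longrightarrow> Ale n p c' d)"
  then have "Ale n p c' c" using assms by blast
  moreover have "Ale n p c c'" using assms h by blast
  ultimately show "c' = c" using Ale_antisym assms h by blast
qed

lemma top_in: "Atop n p \<in> Acar n p" by (auto simp: Atop_def Acar_def Lw_def)
lemma bot_in: "Abot n p \<in> Acar n p" by (auto simp: Abot_def Acar_def Lw_def)

lemma Ale_top: "p \<ge> 1 \<Longrightarrow> a \<in> Acar n p \<Longrightarrow> Ale n p a (Atop n p)"
  by (cases a) (auto simp: Acar_def Atop_def Ale_def Lw_def)

lemma Ale_from_top: "p \<ge> 1 \<Longrightarrow> d \<in> Acar n p \<Longrightarrow> Ale n p (z, int p) d \<Longrightarrow> \<exists>y. d = (y, int p) \<and> lex_le z y"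
  by (cases d) (auto simp: Acar_def Ale_def)

lemma join_top_any:
  assumes "p \<ge> 1" "a \<in> Acar n p"
  shows "Ajoin n p (Atop n p) a = Atop n p" "Ajoin n p a (Atop n p) = Atop n p"
proof -
  have le: "\<And>d. d \<in> Acar n p \<Longrightarrow> Ale n p (Atop n p) d \<Longrightarrow> Ale n p (Atop n p) d" by simp
  have refl: "Ale n p (Atop n p) (Atop n p)" using Ale_top[OF assms(1) top_in] .
  show "Ajoin n p (Atop n p) a = Atop n p"
    by (rule join_eq[OF top_in refl Ale_top[OF assms]]) simp
  show "Ajoin n p a (Atop n p) = Atop n p"
    by (rule join_eq[OF top_in Ale_top[OF assms] refl]) simp
qed



lemma join_special:
  assumes "p \<ge> 1" "a \<in> Acar n p"
  shows "\<exists>y. Ajoin n p a (Aneg n p (Apow n p a p)) = (y, int p) \<and> y \<in> Lw n"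
proof -
  obtain m r \<alpha> where a: "a = ((m,r),\<alpha>)" by (metis prod.exhaust)
  from assms(2)[unfolded a] show ?thesis
  proof (cases rule: Acar_cases)
    case top
    obtain w where w: "Apow n p ((m,r), int p) p = (w, int p)" "w \<in> Lw n"
      using pow_top[OF assms(1) top(2)] by blast
    obtain w1 w2 where ww: "w = (w1,w2)" by (cases w)
    have ng: "Aneg n p (Apow n p a p) = ((w1,w2),0)" using a top w ww by (simp add: Aneg_def)
    define j where "j = lmax (m,r) (int n - 1 - w1, - w2)"
    have jL: "j \<in> Lw n" using top(2) w(2) ww unfolding j_def by (auto simp: Lw_def lmax_def)
    have "Ajoin n p a (Aneg n p (Apow n p a p)) = (j, int p)"
      unfolding ng unfolding a top(1)
    proof (rule join_eq)
      
      show "(j, int p) \<in> Acar n p" using jL by (auto simp: Acar_def)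
      show "Ale n p ((m, r), int p) (j, int p)" using assms(1) unfolding j_def by (auto simp: Ale_def lmax_def split: prod.splits if_splits)
      show "Ale n p ((w1, w2), 0) (j, int p)" using assms(1) unfolding j_def by (auto simp: Ale_def lmax_def split: prod.splits if_splits)
      fix d assume d: "d \<in> Acar n p" "Ale n p ((m, r), int p) d" "Ale n p ((w1, w2), 0) d"
      then obtain y where y: "d = (y, int p)" "lex_le (m,r) y" using Ale_from_top[OF assms(1)] by blast
      obtain y1 y2 where yy: "y = (y1,y2)" by (cases y)
      show "Ale n p (j, int p) d" using y yy d(3) assms(1) unfolding j_def by (auto simp: Ale_def lmax_def split: prod.splits if_splits)
    qed
    then show ?thesis using jL by blast
  next
    case bot
    obtain z where z: "Apow n p ((m,r),0) (Suc (p - 1)) = (z,0)" "inv0 n (Suc (p-1)) z"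
      using pow_bot[OF assms(1), of m r n "p - 1"] bot by (auto simp: Lw_def)
    have zL: "z \<in> Lw n" using inv0_Lw[OF z(2)] by simp
    have z': "Apow n p a p = (z,0)" using z(1) a bot assms(1) by simp
    obtain z1 z2 where zz: "z = (z1,z2)" by (cases z)
    have ng: "Aneg n p (Apow n p a p) = ((z1,z2),int p)" using z' zz by (simp add: Aneg_def)
    define j where "j = lmax (z1,z2) (int n - 1 - m, - r)"
    have jL: "j \<in> Lw n" using bot(2) zL zz unfolding j_def by (auto simp: Lw_def lmax_def)
    have "Ajoin n p a (Aneg n p (Apow n p a p)) = (j, int p)"
      unfolding ng unfolding a bot(1)
    proof (rule join_eq)
      
      show "(j, int p) \<in> Acar n p" using jL by (auto simp: Acar_def)
      show "Ale n p ((m, r), 0) (j, int p)" using assms(1) unfolding j_def by (auto simp: Ale_def lmax_def split: prod.splits if_splits)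
      show "Ale n p ((z1, z2), int p) (j, int p)" using assms(1) unfolding j_def by (auto simp: Ale_def lmax_def split: prod.splits if_splits)
      fix d assume d: "d \<in> Acar n p" "Ale n p ((m, r), 0) d" "Ale n p ((z1, z2), int p) d"
      then obtain y where y: "d = (y, int p)" "lex_le (z1,z2) y" using Ale_from_top[OF assms(1)] by blast
      obtain y1 y2 where yy: "y = (y1,y2)" by (cases y)
      show "Ale n p (j, int p) d" using y yy d(2) assms(1) unfolding j_def by (auto simp: Ale_def lmax_def split: prod.splits if_splits)
    qed
    then show ?thesis using jL by blast
  next
    case mid
    obtain z where z: "Apow n p a p = (z,0)" "z \<in> Lw n"
      using pow_mid_p[OF assms(1) mid] a by blast
    obtain z1 z2 where zz: "z = (z1,z2)" by (cases z)
    have ng: "Aneg n p (Apow n p a p) = ((z1,z2),int p)" using z zz by (simp add: Aneg_def)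
    define j where "j = lmax (z1,z2) (m, r)"
    have jL: "j \<in> Lw n" using mid z(2) zz unfolding j_def by (auto simp: Lw_def lmax_def)
    have "Ajoin n p a (Aneg n p (Apow n p a p)) = (j, int p)"
      unfolding ng unfolding a
    proof (rule join_eq)
      
      show "(j, int p) \<in> Acar n p" using jL by (auto simp: Acar_def)
      show "Ale n p ((m, r), \<alpha>) (j, int p)" using mid unfolding j_def by (auto simp: Ale_def lmax_def split: prod.splits if_splits)
      show "Ale n p ((z1, z2), int p) (j, int p)" using assms(1) unfolding j_def by (auto simp: Ale_def lmax_def split: prod.splits if_splits)
      fix d assume d: "d \<in> Acar n p" "Ale n p ((m, r), \<alpha>) d" "Ale n p ((z1, z2), int p) d"
      then obtain y where y: "d = (y, int p)" "lex_le (z1,z2) y" using Ale_from_top[OF assms(1)] by blast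
      obtain y1 y2 where yy: "y = (y1,y2)" by (cases y)
      show "Ale n p (j, int p) d" using y yy d(2) mid assms(1) unfolding j_def by (auto simp: Ale_def lmax_def split: prod.splits if_splits)
    qed
    then show ?thesis using jL by blast
  qed
qed

lemma tnp_top:
  assumes "p \<ge> 1" "a \<in> Acar n p" "snd a = int p"
  shows "t_np n p a = Atop n p"
proof -
  obtain x where a: "a = (x, int p)" using assms(3) by (cases a) auto
  have "x \<in> Lw n" using assms(2) a by (auto simp: Acar_def)
  then obtain y where "Apow n p a (max (n+1) p) = (y, int p)" "y \<in> Lw n"
    using pow_top[OF assms(1)] a by blast
  then show ?thesis unfolding t_np_def using times_top[OF assms(1)] by simp
qed

lemma tnp_nontop:
  assumes "p \<ge> 1" "a \<in> Acar n p" "snd a \<noteq> int p" "k \<ge> n+1" "k \<ge> p"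
  shows "Apow n p a k = Abot n p"
proof -
  obtain m r \<alpha> where a: "a = ((m,r),\<alpha>)" by (metis prod.exhaust)
  show ?thesis using pow_nontop[OF assms(1), of m r \<alpha> n k] assms a by auto
qed

lemma tnp_bot:
  assumes "p \<ge> 1" "a \<in> Acar n p" "snd a \<noteq> int p"
  shows "t_np n p a = Abot n p"
proof -
  have "t_np n p a = Atimes n p (n+1) (Abot n p)"
    unfolding t_np_def using tnp_nontop[OF assms, of "max (n+1) p"] by simp
  then show ?thesis using times_bot[OF assms(1), of n "n+1"] by simp
qed

lemma bot_ne_top: "p \<ge> 1 \<Longrightarrow> Abot n p \<noteq> Atop n p" by (simp add: Abot_def Atop_def)

lemma Ale_bot: "b \<in> Acar n p \<Longrightarrow> Ale n p (Abot n p) b"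
  by (cases b) (auto simp: Acar_def Abot_def Ale_def Lw_def)

lemma filter_pow: "impl_filter n p F \<Longrightarrow> a \<in> F \<Longrightarrow> Apow n p a k \<in> F"
  by (induction k) (auto simp: impl_filter_def)

lemma filter_sub:
  assumes "p \<ge> 1" "impl_filter n p F" "F \<noteq> Acar n p"
  shows "F \<subseteq> {a \<in> Acar n p. snd a = int p}"
proof
  fix a assume aF: "a \<in> F"
  have aA: "a \<in> Acar n p" using aF assms(2) by (auto simp: impl_filter_def)
  show "a \<in> {a \<in> Acar n p. snd a = int p}"
  proof (rule ccontr)
    assume "a \<notin> {a \<in> Acar n p. snd a = int p}"
    then have "snd a \<noteq> int p" using aA by simp
    then have "Apow n p a (max (n+1) p) = Abot n p" using tnp_nontop[OF assms(1) aA] by simp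
    then have "Abot n p \<in> F" using filter_pow[OF assms(2) aF] by metis
    then have "Acar n p \<subseteq> F" using assms(2) Ale_bot unfolding impl_filter_def by blast
    then show False using assms(2,3) by (auto simp: impl_filter_def)
  qed
qed

lemma T_filter:
  assumes "p \<ge> 1"
  shows "impl_filter n p {a \<in> Acar n p. snd a = int p}"
  unfolding impl_filter_def
proof (intro conjI ballI impI)
  show "{a \<in> Acar n p. snd a = int p} \<subseteq> Acar n p" by blast
  show "Atop n p \<in> {a \<in> Acar n p. snd a = int p}" using top_in by (simp add: Atop_def)
next
  fix a b assume a: "a \<in> {a \<in> Acar n p. snd a = int p}" and b: "b \<in> {a \<in> Acar n p. snd a = int p}"
  obtain x where ax: "a = (x, int p)" using a by (cases a) auto
  obtain y where by': "b = (y, int p)" using b by (cases b) auto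
  obtain x1 x2 where xx: "x = (x1,x2)" by (cases x)
  obtain y1 y2 where yy: "y = (y1,y2)" by (cases y)
  have L: "x \<in> Lw n" "y \<in> Lw n" using a b ax by' by (auto simp: Acar_def)
  have e: "Aodot n p a b = (Lw_star n (x1,x2) (y1,y2), int p)"
    using ax by' xx yy assms by (simp add: Aodot_def)
  have "Lw_star n (x1,x2) (y1,y2) \<in> Lw n" using L xx yy
    by (auto simp: Lw_def Lw_star_def lmax_def)
  then show "Aodot n p a b \<in> {a \<in> Acar n p. snd a = int p}" using e by (auto simp: Acar_def)
next
  fix a b assume a: "a \<in> {a \<in> Acar n p. snd a = int p}" and b: "b \<in> Acar n p" and le: "Ale n p a b"
  obtain x where ax: "a = (x, int p)" using a by (cases a) auto
  obtain y where "b = (y, int p)" using Ale_from_top[OF assms b, of x] le ax by blast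
  then show "b \<in> {a \<in> Acar n p. snd a = int p}" using b by simp
qed

theorem theorem3p6:
  fixes n p :: nat
  assumes "n \<ge> 1" and "p \<ge> 1"
  shows "(\<forall>a\<in>Acar n p. Ajoin n p (t_np n p a) (Aneg n p (t_np n p a)) = Atop n p)
    \<and> Rad n p = {a \<in> Acar n p. t_np n p a = Atop n p}
    \<and> {a \<in> Acar n p. t_np n p a = Atop n p}
        = {a \<in> Acar n p. \<forall>k::nat. k > 0 \<longrightarrow> Atimes n p (n + 1) (Apow n p a k) = Atop n p}
    \<and> (\<forall>k::nat. k > 0 \<longrightarrow> (\<forall>a\<in>Acar n p.
         Atimes n p (n + 1) (Apow n p (Ajoin n p a (Aneg n p (Apow n p a p))) k) = Atop n p))"
proof (intro conjI)
  have p: "p \<ge> 1" by fact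
  have negtop: "Aneg n p (Atop n p) = Abot n p" by (simp add: Aneg_def Abot_def Atop_def)
  have negbot: "Aneg n p (Abot n p) = Atop n p" by (simp add: Aneg_def Abot_def Atop_def)
  have Teq: "{a \<in> Acar n p. t_np n p a = Atop n p} = {a \<in> Acar n p. snd a = int p}"
    using tnp_top[OF p] tnp_bot[OF p] bot_ne_top[OF p] by fastforce
  show "\<forall>a\<in>Acar n p. Ajoin n p (t_np n p a) (Aneg n p (t_np n p a)) = Atop n p"
  proof
    fix a assume a: "a \<in> Acar n p"
    show "Ajoin n p (t_np n p a) (Aneg n p (t_np n p a)) = Atop n p"
    proof (cases "snd a = int p")
      case True then show ?thesis using tnp_top[OF p a] negtop join_top_any[OF p bot_in] by simp
    next
      case False then show ?thesis using tnp_bot[OF p a] negbot join_top_any[OF p bot_in] by simp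
    qed
  qed
  have Tmax: "max_filter n p {a \<in> Acar n p. snd a = int p}"
  proof -
    have "Abot n p \<in> Acar n p" "snd (Abot n p) \<noteq> int p" using bot_in p by (auto simp: Abot_def)
    then have "{a \<in> Acar n p. snd a = int p} \<noteq> Acar n p" by blast
    then show ?thesis unfolding max_filter_def using T_filter[OF p] filter_sub[OF p] by blast
  qed
  have "Rad n p = {a \<in> Acar n p. snd a = int p}"
  proof
    show "Rad n p \<subseteq> {a \<in> Acar n p. snd a = int p}" using Tmax unfolding Rad_def by blast
    show "{a \<in> Acar n p. snd a = int p} \<subseteq> Rad n p"
    proof
      fix a assume a: "a \<in> {a \<in> Acar n p. snd a = int p}"
      have "\<forall>F. max_filter n p F \<longrightarrow> a \<in> F"
      proof (intro allI impI)
        fix F assume F: "max_filter n p F"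
        then have "F \<subseteq> {a \<in> Acar n p. snd a = int p}" using filter_sub[OF p] by (auto simp: max_filter_def)
        then have "{a \<in> Acar n p. snd a = int p} = F" using F T_filter[OF p] Tmax
          unfolding max_filter_def by blast
        then show "a \<in> F" using a by blast
      qed
      then show "a \<in> Rad n p" using a unfolding Rad_def by blast
    qed
  qed
  then show "Rad n p = {a \<in> Acar n p. t_np n p a = Atop n p}" using Teq by simp
  show "{a \<in> Acar n p. t_np n p a = Atop n p}
        = {a \<in> Acar n p. \<forall>k::nat. k > 0 \<longrightarrow> Atimes n p (n + 1) (Apow n p a k) = Atop n p}"
  proof (intro equalityI subsetI)
    fix a assume "a \<in> {a \<in> Acar n p. t_np n p a = Atop n p}"
    then have a: "a \<in> Acar n p" "snd a = int p" using Teq by auto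
    obtain x where ax: "a = (x, int p)" using a by (cases a) auto
    have x: "x \<in> Lw n" using a ax by (auto simp: Acar_def)
    have "\<forall>k. Atimes n p (n + 1) (Apow n p a k) = Atop n p"
    proof
      fix k
      obtain y where "Apow n p a k = (y, int p)" "y \<in> Lw n" using pow_top[OF p x] ax by blast
      then show "Atimes n p (n + 1) (Apow n p a k) = Atop n p" using times_top[OF p] by simp
    qed
    then show "a \<in> {a \<in> Acar n p. \<forall>k::nat. k > 0 \<longrightarrow> Atimes n p (n + 1) (Apow n p a k) = Atop n p}"
      using a by blast
  next
    fix a assume a: "a \<in> {a \<in> Acar n p. \<forall>k::nat. k > 0 \<longrightarrow> Atimes n p (n + 1) (Apow n p a k) = Atop n p}"
    then have "t_np n p a = Atop n p" unfolding t_np_def by auto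
    then show "a \<in> {a \<in> Acar n p. t_np n p a = Atop n p}" using a by blast
  qed
  show "\<forall>k::nat. k > 0 \<longrightarrow> (\<forall>a\<in>Acar n p.
         Atimes n p (n + 1) (Apow n p (Ajoin n p a (Aneg n p (Apow n p a p))) k) = Atop n p)"
  proof (intro allI impI ballI)
    fix k :: nat and a assume a: "a \<in> Acar n p"
    obtain j where j: "Ajoin n p a (Aneg n p (Apow n p a p)) = (j, int p)" "j \<in> Lw n"
      using join_special[OF p a] by blast
    obtain y where "Apow n p (j, int p) k = (y, int p)" "y \<in> Lw n" using pow_top[OF p j(2)] by blast
    then show "Atimes n p (n + 1) (Apow n p (Ajoin n p a (Aneg n p (Apow n p a p))) k) = Atop n p"
      using j times_top[OF p] by simp
  qed
qed

end
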